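(* Let $\pi,\rho$ be probability distributions on $\Sigma^n=\{0,1\}^n$ with fidelity $F(\pi,\rho)=\sum_{x}\sqrt{\pi_x\rho_x}\ge1-\delta$, and let $t>4$. Let $M_t(\pi,\rho)=\{x\in\Sigma^n:\pi_x>0,\ \rho_x>0,\ t^{-1}\le\pi_x/\rho_x\le t\}$ be the set of $t$-balanced strings. Then $$\sum_{x\in M_t(\pi,\rho)}\pi_x\ge1-\frac{2\delta}{1-2t^{-1/2}}.$$ *)

theory Defs
  imports "HOL-Analysis.Analysis"
begin

definition cube :: "nat \<Rightarrow> bool list set" where
  "cube n = {x. length x = n}"

definition is_distr :: "nat \<Rightarrow> (bool list \<Rightarrow> real) \<Rightarrow> bool" where
  "is_distr n p \<longleftrightarrow> (\<forall>x\<in>cube n. p x \<ge> 0) \<and> (\<Sum>x\<in>cube n. p x) = 1"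

definition fidelity :: "nat \<Rightarrow> (bool list \<Rightarrow> real) \<Rightarrow> (bool list \<Rightarrow> real) \<Rightarrow> real" where
  "fidelity n p r = (\<Sum>x\<in>cube n. sqrt (p x * r x))"

definition balanced_set :: "nat \<Rightarrow> real \<Rightarrow> (bool list \<Rightarrow> real) \<Rightarrow> (bool list \<Rightarrow> real) \<Rightarrow> bool list set" where
  "balanced_set n t p r = {x\<in>cube n. p x > 0 \<and> r x > 0 \<and> inverse t \<le> p x / r x \<and> p x / r x \<le> t}"

end

theory Submission
  imports Defs
begin

lemma pt_out:
  fixes p r s t :: real
  assumes "p \<ge> 0" "r \<ge> 0" "t > 0" "s > 0" "s^2 = inverse t"
    and "\<not> (p > 0 \<and> r > 0 \<and> inverse t \<le> p / r \<and> p / r \<le> t)"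
  shows "sqrt (p * r) \<le> s * (p + r)"
proof (cases "p = 0 \<or> r = 0")
  case True
  then show ?thesis using assms by auto
next
  case False
  then have pp: "p > 0" and rp: "r > 0" using assms by auto
  then have "p / r < inverse t \<or> p / r > t" using assms(6) by auto
  then show ?thesis
  proof
    assume "p / r < inverse t"
    then have "p < r / t" using rp assms(3) by (simp add: field_simps)
    then have "p \<le> r * s^2" using assms(5) by (simp add: divide_inverse)
    then have "p * r \<le> (r * s^2) * r" using rp by (intro mult_right_mono) auto
    then have "p * r \<le> (s * r)^2" by (simp add: power2_eq_square algebra_simps)
    then have "sqrt (p * r) \<le> sqrt ((s*r)^2)" by (rule real_sqrt_le_mono)
    also have "\<dots> = s * r" using rp assms(4) by simp
    finally have "sqrt (p * r) \<le> s * r" .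
    moreover have "s * r \<le> s * (p + r)" using pp assms(4) by (intro mult_left_mono) auto
    ultimately show ?thesis by linarith
  next
    assume "p / r > t"
    then have "t * r < p" using rp by (simp add: field_simps)
    then have "r < p / t" using assms(3) by (simp add: field_simps)
    then have "r \<le> p * s^2" using assms(5) by (simp add: divide_inverse)
    then have "p * r \<le> p * (p * s^2)" using pp by (intro mult_left_mono) auto
    then have "p * r \<le> (s * p)^2" by (simp add: power2_eq_square algebra_simps)
    then have "sqrt (p * r) \<le> sqrt ((s*p)^2)" by (rule real_sqrt_le_mono)
    also have "\<dots> = s * p" using pp assms(4) by simp
    finally have "sqrt (p * r) \<le> s * p" .
    moreover have "s * p \<le> s * (p + r)" using rp assms(4) by (intro mult_left_mono) auto
    ultimately show ?thesis by linarith
  qed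
qed

lemma pt_in:
  fixes p r :: real
  assumes "p \<ge> 0" "r \<ge> 0"
  shows "sqrt (p * r) \<le> (p + r) / 2"
  using arith_geo_mean_sqrt[of p r] assms by simp

theorem lemma5p4:
  fixes n :: nat and p r :: "bool list \<Rightarrow> real" and \<delta> t :: real
  assumes "is_distr n p" and "is_distr n r"
    and "fidelity n p r \<ge> 1 - \<delta>"
    and "t > 4"
  shows "(\<Sum>x\<in>balanced_set n t p r. p x) \<ge> 1 - 2 * \<delta> / (1 - 2 * t powr (-1/2))"
proof -
  define C where "C = cube n"
  define M where "M = balanced_set n t p r"
  define s where "s = t powr (-1/2)"
  have pnn: "\<And>x. x \<in> C \<Longrightarrow> p x \<ge> 0" and ps: "(\<Sum>x\<in>C. p x) = 1"
    using assms(1) unfolding is_distr_def C_def by auto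
  have rnn: "\<And>x. x \<in> C \<Longrightarrow> r x \<ge> 0" and rs: "(\<Sum>x\<in>C. r x) = 1"
    using assms(2) unfolding is_distr_def C_def by auto
  have fin: "finite C" using ps by (metis sum.infinite zero_neq_one)
  have MC: "M \<subseteq> C" unfolding M_def balanced_set_def C_def by auto
  have tp: "t > 0" using assms(4) by simp
  have sp: "s > 0" unfolding s_def using tp by simp
  have "t powr (-1/2) = inverse (t powr (1/2))"
    using powr_minus[of t "1/2"] by simp
  also have "t powr (1/2) = sqrt t" using tp by (simp add: powr_half_sqrt)
  finally have sinv: "s = inverse (sqrt t)" unfolding s_def .
  have s2: "s^2 = inverse t" unfolding sinv using tp by (simp add: power_inverse)
  have "sqrt t > 2" using assms(4) by (intro real_less_rsqrt) simp
  have "s = inverse (sqrt t)" by (rule sinv)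
  then have shalf: "s < 1/2"
  proof -
    have "inverse (sqrt t) < inverse 2" using \<open>sqrt t > 2\<close> by (intro less_imp_inverse_less) auto
    then show ?thesis using \<open>s = inverse (sqrt t)\<close> by simp
  qed
  have pt: "\<And>x. x \<in> C \<Longrightarrow> sqrt (p x * r x) \<le> (if x \<in> M then (p x + r x)/2 else s * (p x + r x))"
  proof -
    fix x assume x: "x \<in> C"
    show "sqrt (p x * r x) \<le> (if x \<in> M then (p x + r x)/2 else s * (p x + r x))"
    proof (cases "x \<in> M")
      case True then show ?thesis using pt_in pnn rnn x by simp
    next
      case False
      then have "\<not> (p x > 0 \<and> r x > 0 \<and> inverse t \<le> p x / r x \<and> p x / r x \<le> t)"
        using x unfolding M_def balanced_set_def C_def by auto
      then show ?thesis using False pt_out[OF pnn[OF x] rnn[OF x] tp sp s2] by simp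
    qed
  qed
  define Pm where "Pm = (\<Sum>x\<in>M. p x)"
  define Rm where "Rm = (\<Sum>x\<in>M. r x)"
  define Pb where "Pb = (\<Sum>x\<in>C-M. p x)"
  define Rb where "Rb = (\<Sum>x\<in>C-M. r x)"
  have e1: "Pm + Pb = 1" unfolding Pm_def Pb_def using ps fin MC
    by (metis sum.subset_diff add.commute)
  have e2: "Rm + Rb = 1" unfolding Rm_def Rb_def using rs fin MC
    by (metis sum.subset_diff add.commute)
  have Pbn: "Pb \<ge> 0" unfolding Pb_def using pnn by (auto intro: sum_nonneg)
  have Rbn: "Rb \<ge> 0" unfolding Rb_def using rnn by (auto intro: sum_nonneg)
  have "1 - \<delta> \<le> (\<Sum>x\<in>C. sqrt (p x * r x))" using assms(3) unfolding fidelity_def C_def by simp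
  also have "\<dots> \<le> (\<Sum>x\<in>C. (if x \<in> M then (p x + r x)/2 else s * (p x + r x)))"
    using pt by (rule sum_mono)
  also have "\<dots> = (\<Sum>x\<in>M. (p x + r x)/2) + (\<Sum>x\<in>C-M. s * (p x + r x))"
    using fin MC by (simp add: sum.If_cases Int_absorb1 Diff_eq Int_commute)
  also have "\<dots> = (Pm + Rm)/2 + s * (Pb + Rb)"
    unfolding Pm_def Rm_def Pb_def Rb_def
    by (simp add: sum.distrib sum_distrib_left[symmetric] sum_divide_distrib[symmetric] distrib_left)
  finally have F: "1 - \<delta> \<le> (Pm + Rm)/2 + s * (Pb + Rb)" .
  have aa: "(Pb + Rb) * (1 - 2 * s) = (Pb + Rb) - 2 * (s * (Pb + Rb))" by (simp add: algebra_simps)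
  have a: "(Pb + Rb) * (1 - 2 * s) \<le> 2 * \<delta>" 
  proof -
    have g: "\<And>X::real. 1 - \<delta> \<le> (Pm + Rm)/2 + X \<Longrightarrow> Pb + Rb - 2 * X \<le> 2 * \<delta>"
      using e1 e2 by (simp add: field_simps)
    show ?thesis unfolding aa by (rule g[OF F])
  qed
  have pos: "1 - 2 * s > 0" using shalf by simp
  have "Pb + Rb \<le> 2 * \<delta> / (1 - 2 * s)" using a pos
    by (simp add: pos_le_divide_eq)
  then have "Pb \<le> 2 * \<delta> / (1 - 2 * s)" using Rbn by linarith
  then show ?thesis using e1 unfolding Pm_def M_def s_def by linarith
qed

end
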